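(* Assume the Gaussian setting (G) described in the context. There exists a positive constant $K$ such that $$\mathbb{P}\Big(\forall\lambda,\lambda'\in[\lambda_{\min},\lambda_{\max}]:\ \mathcal{C}_{\lambda'}(\hat w_R(\lambda))\le\mathcal{C}_{\lambda'}(\hat w_R(\lambda'))+K|\lambda-\lambda'|\Big)=1-o(1).$$
   Context: Asymptotic regime: sequence indexed by $n$, $p=p(n)$, $p/n\to\delta\in(0,\infty)$. Data $y=X\beta+\sigma z$, deterministic $\beta$; $K$ depends only on $\delta,\sigma_{\max},\lambda_{\min},\lambda_{\max}$. Gaussian setting (G): $X_{ij}$ i.i.d. $\mathcal{N}(0,1)$; $z_i$ i.i.d. $\mathcal{N}(0,1)$ independent of $X$, $\sigma^2\le\sigma_{\max}^2$; $\|\beta\|_2^2\to\sigma_\beta^2\le\sigma_{\max}^2<\infty$; $0<\lambda_{\min}\le\lambda_{\max}<\infty$. $\mathcal{C}_\lambda(w)=\frac{1}{2n}\|Xw-\sigma z\|_2^2+\frac{\lambda}{2}\|w+\beta\|_2^2$, and $\hat w_R(\lambda)=\hat\beta_R(\lambda)-\beta$, where $\hat\beta_R(\lambda)=\arg\min_b\frac1{2n}\|y-Xb\|_2^2+\frac{\lambda}{2}\|b\|_2^2$ (so $\hat w_R(\lambda)$ minimizes $\mathcal{C}_\lambda$). *)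

theory Defs
  imports "HOL-Probability.Probability"
begin

text \<open>Vectors in R^p are represented as functions nat => real, only indices j < p matter;
  n x p matrices as nat => nat => real (indices i < n, j < p).\<close>

definition N01 :: "real measure" where
  "N01 = density lborel std_normal_density"

text \<open>Index set of the randomness: entries X_ij (i<n, j<p) and noise z_i (i<n).\<close>
definition gauss_idx :: "nat \<Rightarrow> nat \<Rightarrow> ((nat \<times> nat) + nat) set" where
  "gauss_idx n p = Inl ` ({..<n} \<times> {..<p}) \<union> Inr ` {..<n}"

definition gauss_meas :: "nat \<Rightarrow> nat \<Rightarrow> ((nat \<times> nat) + nat \<Rightarrow> real) measure" where
  "gauss_meas n p = PiM (gauss_idx n p) (\<lambda>_. N01)"

definition Xof :: "((nat \<times> nat) + nat \<Rightarrow> real) \<Rightarrow> nat \<Rightarrow> nat \<Rightarrow> real" where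
  "Xof \<omega> i j = \<omega> (Inl (i, j))"

definition zof :: "((nat \<times> nat) + nat \<Rightarrow> real) \<Rightarrow> nat \<Rightarrow> real" where
  "zof \<omega> i = \<omega> (Inr i)"

definition resp :: "nat \<Rightarrow> (nat \<Rightarrow> nat \<Rightarrow> real) \<Rightarrow> (nat \<Rightarrow> real) \<Rightarrow> real \<Rightarrow> (nat \<Rightarrow> real) \<Rightarrow> nat \<Rightarrow> real" where
  "resp p X \<beta> \<sigma> z i = (\<Sum>j<p. X i j * \<beta> j) + \<sigma> * z i"

definition ridge_obj :: "nat \<Rightarrow> nat \<Rightarrow> (nat \<Rightarrow> nat \<Rightarrow> real) \<Rightarrow> (nat \<Rightarrow> real) \<Rightarrow> real \<Rightarrow> (nat \<Rightarrow> real) \<Rightarrow> real" where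
  "ridge_obj n p X y lam b =
     (\<Sum>i<n. (y i - (\<Sum>j<p. X i j * b j))\<^sup>2) / (2 * real n) + lam / 2 * (\<Sum>j<p. (b j)\<^sup>2)"

definition ridge :: "nat \<Rightarrow> nat \<Rightarrow> (nat \<Rightarrow> nat \<Rightarrow> real) \<Rightarrow> (nat \<Rightarrow> real) \<Rightarrow> real \<Rightarrow> nat \<Rightarrow> real" where
  "ridge n p X y lam = (THE b. (\<forall>j\<ge>p. b j = 0) \<and>
      (\<forall>b'. (\<forall>j\<ge>p. b' j = 0) \<longrightarrow> ridge_obj n p X y lam b \<le> ridge_obj n p X y lam b'))"

definition costC :: "nat \<Rightarrow> nat \<Rightarrow> (nat \<Rightarrow> nat \<Rightarrow> real) \<Rightarrow> (nat \<Rightarrow> real) \<Rightarrow> real \<Rightarrow> (nat \<Rightarrow> real)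
    \<Rightarrow> real \<Rightarrow> (nat \<Rightarrow> real) \<Rightarrow> real" where
  "costC n p X z \<sigma> \<beta> lam w =
     (\<Sum>i<n. ((\<Sum>j<p. X i j * w j) - \<sigma> * z i)\<^sup>2) / (2 * real n) + lam / 2 * (\<Sum>j<p. (w j + \<beta> j)\<^sup>2)"

definition what :: "nat \<Rightarrow> nat \<Rightarrow> (nat \<Rightarrow> nat \<Rightarrow> real) \<Rightarrow> (nat \<Rightarrow> real) \<Rightarrow> real \<Rightarrow> (nat \<Rightarrow> real)
    \<Rightarrow> real \<Rightarrow> nat \<Rightarrow> real" where
  "what n p X z \<sigma> \<beta> lam = (\<lambda>j. ridge n p X (resp p X \<beta> \<sigma> z) lam j - \<beta> j)"

end

theory Submission
  imports Defs "Jordan_Normal_Form.Determinant"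
begin


definition Gm :: "nat \<Rightarrow> (nat \<Rightarrow> nat \<Rightarrow> real) \<Rightarrow> nat \<Rightarrow> nat \<Rightarrow> real" where
  "Gm n X j k = (\<Sum>i<n. X i j * X i k) / real n"
definition rv :: "nat \<Rightarrow> (nat \<Rightarrow> nat \<Rightarrow> real) \<Rightarrow> (nat \<Rightarrow> real) \<Rightarrow> nat \<Rightarrow> real" where
  "rv n X y j = (\<Sum>i<n. X i j * y i) / real n"
definition Am :: "nat \<Rightarrow> nat \<Rightarrow> (nat \<Rightarrow> nat \<Rightarrow> real) \<Rightarrow> real \<Rightarrow> real Matrix.mat" where
  "Am n p X lam = Matrix.mat p p (\<lambda>(j,k). Gm n X j k + (if j = k then lam else 0))"
definition bsol :: "nat \<Rightarrow> nat \<Rightarrow> (nat \<Rightarrow> nat \<Rightarrow> real) \<Rightarrow> (nat \<Rightarrow> real) \<Rightarrow> real \<Rightarrow> nat \<Rightarrow> real" where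
  "bsol n p X y lam j = (if j < p then (\<Sum>k<p. adj_mat (Am n p X lam) $$ (j,k) * rv n X y k)
      / Determinant.det (Am n p X lam) else 0)"

lemma quad_form:
  "(\<Sum>j<p. v j * (\<Sum>k<p. Gm n X j k * v k)) = (\<Sum>i<n. (\<Sum>j<p. X i j * v j)^2) / real n"
proof -
  have "(\<Sum>i<n. (\<Sum>j<p. X i j * v j)^2) = (\<Sum>i<n. \<Sum>j<p. \<Sum>k<p. v j * (X i j * X i k) * v k)"
    by (simp add: power2_eq_square sum_product algebra_simps)
  also have "\<dots> = (\<Sum>j<p. \<Sum>k<p. \<Sum>i<n. v j * (X i j * X i k) * v k)"
    by (simp add: sum.swap[of _ "{..<n}"] )
  also have "\<dots> = (\<Sum>j<p. v j * (\<Sum>k<p. (\<Sum>i<n. X i j * X i k) * v k))"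
    by (simp add: sum_distrib_left sum_distrib_right algebra_simps)
  finally show ?thesis
    by (simp add: Gm_def sum_divide_distrib[symmetric] sum_distrib_left algebra_simps)
qed

lemma quad_nonneg: "0 \<le> (\<Sum>j<p. v j * (\<Sum>k<p. Gm n X j k * v k))"
  by (simp add: quad_form sum_nonneg)

lemma Am_carrier: "Am n p X lam \<in> carrier_mat p p"
  by (simp add: Am_def)

lemma Am_row:
  assumes "v \<in> carrier_vec p" "j < p"
  shows "vec_index (Am n p X lam *\<^sub>v v) j = (\<Sum>k<p. Gm n X j k * vec_index v k) + lam * vec_index v j"
proof -
  have "vec_index (Am n p X lam *\<^sub>v v) j = (\<Sum>k<p. (Gm n X j k + (if j = k then lam else 0)) * vec_index v k)"
    using assms by (simp add: Am_def scalar_prod_def lessThan_atLeast0)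
  also have "\<dots> = (\<Sum>k<p. Gm n X j k * vec_index v k) + (\<Sum>k<p. (if j = k then lam * vec_index v k else 0))"
    by (subst sum.distrib[symmetric]) (rule sum.cong, auto simp: algebra_simps)
  also have "\<dots> = (\<Sum>k<p. Gm n X j k * vec_index v k) + lam * vec_index v j"
    using assms by (simp add: sum.delta)
  finally show ?thesis .
qed

lemma det_Am_nz:
  assumes "lam > 0"
  shows "Determinant.det (Am n p X lam) \<noteq> 0"
proof
  assume "Determinant.det (Am n p X lam) = 0"
  then obtain v where v: "v \<in> carrier_vec p" "v \<noteq> 0\<^sub>v p" "Am n p X lam *\<^sub>v v = 0\<^sub>v p"
    using det_0_iff_vec_prod_zero[OF Am_carrier] by blast
  define f where "f k = vec_index v k" for k
  have row: "(\<Sum>k<p. Gm n X j k * f k) + lam * f j = 0" if "j < p" for j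
    using Am_row[OF v(1) that, of n X lam] v(3) that by (simp add: f_def)
  have "(\<Sum>j<p. f j * ((\<Sum>k<p. Gm n X j k * f k) + lam * f j)) = 0"
    using row by simp
  then have "(\<Sum>j<p. f j * (\<Sum>k<p. Gm n X j k * f k)) + lam * (\<Sum>j<p. (f j)^2) = 0"
    by (simp add: distrib_left sum.distrib sum_distrib_left power2_eq_square algebra_simps)
  moreover have "0 \<le> (\<Sum>j<p. f j * (\<Sum>k<p. Gm n X j k * f k))" by (rule quad_nonneg)
  moreover have "0 \<le> (\<Sum>j<p. (f j)^2)" by (simp add: sum_nonneg)
  ultimately have "lam * (\<Sum>j<p. (f j)^2) = 0" using assms
    by (smt (verit) mult_nonneg_nonneg)
  then have "(\<Sum>j<p. (f j)^2) = 0" using assms by simp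
  then have "\<forall>j\<in>{..<p}. (f j)^2 = 0"
    by (subst (asm) sum_nonneg_eq_0_iff) auto
  then have "v = 0\<^sub>v p"
    using v(1) by (intro eq_vecI) (auto simp: f_def)
  with v(2) show False by simp
qed

lemma bsol_NE:
  assumes "lam > 0" "j < p"
  shows "(\<Sum>k<p. Gm n X j k * bsol n p X y lam k) + lam * bsol n p X y lam j = rv n X y j"
proof -
  define A where "A = Am n p X lam"
  define R where "R = Matrix.vec p (rv n X y)"
  define W where "W = adj_mat A *\<^sub>v R"
  define d where "d = Determinant.det A"
  have A: "A \<in> carrier_mat p p" by (simp add: A_def Am_carrier)
  have d: "d \<noteq> 0" using det_Am_nz[OF assms(1)] by (simp add: d_def A_def)
  have adjc: "adj_mat A \<in> carrier_mat p p" using adj_mat[OF A] by simp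
  have W: "W \<in> carrier_vec p" using adjc by (simp add: W_def R_def)
  have Wk: "vec_index W k = d * bsol n p X y lam k" if "k < p" for k
    using that adjc d by (simp add: W_def R_def bsol_def A_def d_def scalar_prod_def lessThan_atLeast0)
  have "A *\<^sub>v W = (A * adj_mat A) *\<^sub>v R"
    unfolding W_def using A adjc by (simp add: R_def assoc_mult_mat_vec)
  also have "\<dots> = (d \<cdot>\<^sub>m 1\<^sub>m p) *\<^sub>v R" using adj_mat[OF A] by (simp add: d_def)
  also have "\<dots> = d \<cdot>\<^sub>v R"
  proof -
    have Rc: "R \<in> carrier_vec p" by (simp add: R_def)
    have "d \<cdot>\<^sub>v (1\<^sub>m p *\<^sub>v R) = (d \<cdot>\<^sub>m 1\<^sub>m p) *\<^sub>v R" using Rc by auto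
    then show ?thesis using Rc by simp
  qed
  finally have AW: "A *\<^sub>v W = d \<cdot>\<^sub>v R" .
  have "vec_index (A *\<^sub>v W) j = d * rv n X y j" using AW assms by (simp add: R_def)
  moreover have "vec_index (A *\<^sub>v W) j = (\<Sum>k<p. Gm n X j k * vec_index W k) + lam * vec_index W j"
    unfolding A_def by (rule Am_row[OF W assms(2)])
  ultimately have "(\<Sum>k<p. Gm n X j k * (d * bsol n p X y lam k)) + lam * (d * bsol n p X y lam j) = d * rv n X y j"
    using Wk assms by simp
  then have "d * ((\<Sum>k<p. Gm n X j k * bsol n p X y lam k) + lam * bsol n p X y lam j) = d * rv n X y j"
    by (simp add: sum_distrib_left algebra_simps)
  then show ?thesis using d by simp
qed

lemma cross_term:
  "(\<Sum>i<n. ((y::nat\<Rightarrow>real) i - (\<Sum>j<p. X i j * b j)) * (\<Sum>j<p. X i j * h j))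
   = (\<Sum>j<p. h j * ((\<Sum>i<n. X i j * y i) - (\<Sum>k<p. (\<Sum>i<n. X i j * X i k) * b k)))"
proof -
  have "(\<Sum>i<n. (y i - (\<Sum>j<p. X i j * b j)) * (\<Sum>j<p. X i j * h j))
      = (\<Sum>i<n. \<Sum>j<p. h j * (X i j * y i) - h j * (\<Sum>k<p. X i j * X i k * b k))"
  proof (rule sum.cong[OF refl])
    fix i
    have "(y i - (\<Sum>j<p. X i j * b j)) * (\<Sum>j<p. X i j * h j) = (\<Sum>j<p. h j * X i j * (y i - (\<Sum>k<p. X i k * b k)))"
      unfolding sum_distrib_left by (rule sum.cong[OF refl]) (simp add: algebra_simps)
    also have "\<dots> = (\<Sum>j<p. h j * (X i j * y i) - h j * (\<Sum>k<p. X i j * X i k * b k))"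
      by (rule sum.cong[OF refl]) (simp add: right_diff_distrib sum_distrib_left algebra_simps)
    finally show "(y i - (\<Sum>j<p. X i j * b j)) * (\<Sum>j<p. X i j * h j) = (\<Sum>j<p. h j * (X i j * y i) - h j * (\<Sum>k<p. X i j * X i k * b k))" .
  qed
  also have "\<dots> = (\<Sum>j<p. \<Sum>i<n. h j * (X i j * y i) - h j * (\<Sum>k<p. X i j * X i k * b k))"
    by (rule sum.swap)
  also have "\<dots> = (\<Sum>j<p. h j * ((\<Sum>i<n. X i j * y i) - (\<Sum>i<n. \<Sum>k<p. X i j * X i k * b k)))"
    by (simp add: sum_subtractf sum_distrib_left right_diff_distrib)
  also have "\<dots> = (\<Sum>j<p. h j * ((\<Sum>i<n. X i j * y i) - (\<Sum>k<p. (\<Sum>i<n. X i j * X i k) * b k)))"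
    by (simp add: sum.swap[of _ "{..<n}"] sum_distrib_right)
  finally show ?thesis .
qed

lemma obj_expand:
  assumes "n > 0"
  shows "ridge_obj n p X y lam (\<lambda>j. b j + h j) = ridge_obj n p X y lam b
     + (\<Sum>j<p. h j * ((\<Sum>k<p. Gm n X j k * b k) + lam * b j - rv n X y j))
     + ((\<Sum>i<n. (\<Sum>j<p. X i j * h j)^2) / (2 * real n) + lam / 2 * (\<Sum>j<p. (h j)^2))"
proof -
  define U where "U = (\<Sum>i<n. (y i - (\<Sum>j<p. X i j * b j))^2)"
  define V where "V = (\<Sum>i<n. (\<Sum>j<p. X i j * h j)^2)"
  define C where "C = (\<Sum>i<n. (y i - (\<Sum>j<p. X i j * b j)) * (\<Sum>j<p. X i j * h j))"
  have pt: "(y i - (\<Sum>j<p. X i j * (b j + h j)))^2 = (y i - (\<Sum>j<p. X i j * b j))^2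
      - 2 * ((y i - (\<Sum>j<p. X i j * b j)) * (\<Sum>j<p. X i j * h j)) + (\<Sum>j<p. X i j * h j)^2" for i
  proof -
    have sd: "(\<Sum>j<p. X i j * (b j + h j)) = (\<Sum>j<p. X i j * b j) + (\<Sum>j<p. X i j * h j)"
      by (simp add: distrib_left sum.distrib)
    have alg: "\<And>yy A B :: real. (yy - (A + B))^2 = (yy - A)^2 - 2 * ((yy - A) * B) + B^2"
      by (simp add: power2_eq_square algebra_simps)
    show ?thesis unfolding sd by (rule alg)
  qed
  have e1: "(\<Sum>i<n. (y i - (\<Sum>j<p. X i j * (b j + h j)))^2) = U - 2 * C + V"
    unfolding pt U_def V_def C_def by (simp add: sum.distrib sum_subtractf sum_distrib_left)
  have e2: "(\<Sum>j<p. (b j + h j)^2) = (\<Sum>j<p. (b j)^2) + 2 * (\<Sum>j<p. h j * b j) + (\<Sum>j<p. (h j)^2)"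
  proof -
    have alg: "\<And>A B :: real. (A + B)^2 = A^2 + 2 * (B * A) + B^2"
      by (simp add: power2_eq_square algebra_simps)
    show ?thesis unfolding alg by (simp add: sum.distrib sum_distrib_left)
  qed
  have e3: "C = real n * (\<Sum>j<p. h j * (rv n X y j - (\<Sum>k<p. Gm n X j k * b k)))"
  proof -
    have q: "real n * (rv n X y j - (\<Sum>k<p. Gm n X j k * b k)) = (\<Sum>i<n. X i j * y i) - (\<Sum>k<p. (\<Sum>i<n. X i j * X i k) * b k)" for j
    proof -
      have 1: "real n * rv n X y j = (\<Sum>i<n. X i j * y i)" using assms by (simp add: rv_def)
      have 2: "real n * (\<Sum>k<p. Gm n X j k * b k) = (\<Sum>k<p. (\<Sum>i<n. X i j * X i k) * b k)"
        using assms by (simp add: Gm_def sum_distrib_left)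
      show ?thesis using 1 2 by (simp add: right_diff_distrib)
    qed
    have "C = (\<Sum>j<p. h j * (real n * (rv n X y j - (\<Sum>k<p. Gm n X j k * b k))))"
      unfolding C_def cross_term q ..
    also have "\<dots> = real n * (\<Sum>j<p. h j * (rv n X y j - (\<Sum>k<p. Gm n X j k * b k)))"
      by (simp add: sum_distrib_left algebra_simps)
    finally show ?thesis .
  qed
  have e4: "(\<Sum>j<p. h j * ((\<Sum>k<p. Gm n X j k * b k) + lam * b j - rv n X y j))
      = - (\<Sum>j<p. h j * (rv n X y j - (\<Sum>k<p. Gm n X j k * b k))) + lam * (\<Sum>j<p. h j * b j)"
    by (simp add: sum_distrib_left algebra_simps sum.distrib sum_subtractf sum_negf)
  define T where "T = (\<Sum>j<p. h j * (rv n X y j - (\<Sum>k<p. Gm n X j k * b k)))"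
  have f: "(U - 2 * (real n * T) + V) / (2 * real n) = U / (2 * real n) - T + V / (2 * real n)"
    using assms by (simp add: field_simps)
  show ?thesis
    unfolding ridge_obj_def e1 e2 e4 U_def[symmetric] V_def[symmetric] e3 T_def[symmetric] f
    by (simp add: algebra_simps)
qed

lemma bsol_expand:
  assumes "n > 0" "lam > 0"
  shows "ridge_obj n p X y lam b' = ridge_obj n p X y lam (bsol n p X y lam)
     + ((\<Sum>i<n. (\<Sum>j<p. X i j * (b' j - bsol n p X y lam j))^2) / (2 * real n)
        + lam / 2 * (\<Sum>j<p. (b' j - bsol n p X y lam j)^2))"
proof -
  let ?b = "bsol n p X y lam"
  have "ridge_obj n p X y lam b' = ridge_obj n p X y lam (\<lambda>j. ?b j + (b' j - ?b j))" by simp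
  also have "\<dots> = ridge_obj n p X y lam ?b
     + (\<Sum>j<p. (b' j - ?b j) * ((\<Sum>k<p. Gm n X j k * ?b k) + lam * ?b j - rv n X y j))
     + ((\<Sum>i<n. (\<Sum>j<p. X i j * (b' j - ?b j))^2) / (2 * real n) + lam / 2 * (\<Sum>j<p. (b' j - ?b j)^2))"
    by (rule obj_expand[OF assms(1)])
  also have "(\<Sum>j<p. (b' j - ?b j) * ((\<Sum>k<p. Gm n X j k * ?b k) + lam * ?b j - rv n X y j)) = 0"
    using bsol_NE[OF assms(2)] by (intro sum.neutral) auto
  finally show ?thesis by simp
qed

lemma Q_nonneg:
  assumes "lam > 0"
  shows "0 \<le> (\<Sum>i<n. (\<Sum>j<p. X i j * (d j))^2) / (2 * real n) + lam / 2 * (\<Sum>j<p. (d j)^2)"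
proof -
  have "0 \<le> (\<Sum>i<n. (\<Sum>j<p. X i j * (d j))^2) / (2 * real n)"
    by (intro divide_nonneg_nonneg sum_nonneg) auto
  moreover have "0 \<le> lam / 2 * (\<Sum>j<p. (d j)^2)"
    using assms by (intro mult_nonneg_nonneg sum_nonneg) auto
  ultimately show ?thesis by linarith
qed

lemma ridge_eq:
  assumes "n > 0" "lam > 0"
  shows "ridge n p X y lam = bsol n p X y lam"
  unfolding ridge_def
proof (rule the_equality)
  let ?b = "bsol n p X y lam"
  show "(\<forall>j\<ge>p. ?b j = 0) \<and> (\<forall>b'. (\<forall>j\<ge>p. b' j = 0) \<longrightarrow> ridge_obj n p X y lam ?b \<le> ridge_obj n p X y lam b')"
  proof (intro conjI allI impI)
    fix b'
    have e: "ridge_obj n p X y lam b' = ridge_obj n p X y lam (bsol n p X y lam)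
     + ((\<Sum>i<n. (\<Sum>j<p. X i j * (b' j - bsol n p X y lam j))^2) / (2 * real n)
        + lam / 2 * (\<Sum>j<p. (b' j - bsol n p X y lam j)^2))"
      by (rule bsol_expand[OF assms])
    show "ridge_obj n p X y lam ?b \<le> ridge_obj n p X y lam b'"
      using Q_nonneg[OF assms(2), where d="\<lambda>j. b' j - ?b j" and n=n and p=p and X=X] e by linarith
  qed (simp add: bsol_def)
next
  let ?b = "bsol n p X y lam"
  fix b assume b: "(\<forall>j\<ge>p. b j = 0) \<and> (\<forall>b'. (\<forall>j\<ge>p. b' j = 0) \<longrightarrow> ridge_obj n p X y lam b \<le> ridge_obj n p X y lam b')"
  have sup: "\<forall>j\<ge>p. ?b j = 0" by (simp add: bsol_def)
  have le: "ridge_obj n p X y lam b \<le> ridge_obj n p X y lam ?b" using b sup by blast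
  have e: "ridge_obj n p X y lam b = ridge_obj n p X y lam (bsol n p X y lam)
     + ((\<Sum>i<n. (\<Sum>j<p. X i j * (b j - bsol n p X y lam j))^2) / (2 * real n)
        + lam / 2 * (\<Sum>j<p. (b j - bsol n p X y lam j)^2))"
    by (rule bsol_expand[OF assms])
  have q1: "0 \<le> (\<Sum>i<n. (\<Sum>j<p. X i j * (b j - ?b j))^2) / (2 * real n)"
    by (intro divide_nonneg_nonneg sum_nonneg) auto
  have q2: "0 \<le> (\<Sum>j<p. (b j - ?b j)^2)" by (intro sum_nonneg) auto
  have "lam / 2 * (\<Sum>j<p. (b j - ?b j)^2) \<le> 0" using le e q1 by linarith
  then have "lam * (\<Sum>j<p. (b j - ?b j)^2) \<le> 0" by simp
  then have "(\<Sum>j<p. (b j - ?b j)^2) \<le> 0" using assms(2) by (simp add: mult_le_0_iff)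
  then have s0: "(\<Sum>j<p. (b j - ?b j)^2) = 0" using q2 by linarith
  have all0: "\<forall>j\<in>{..<p}. (b j - ?b j)^2 = 0"
    using s0 by (subst (asm) sum_nonneg_eq_0_iff) auto
  show "b = ?b"
  proof
    fix j show "b j = ?b j"
    proof (cases "j < p")
      case True
      then have "(b j - ?b j)^2 = 0" using all0 by blast
      then show ?thesis by simp
    next
      case False
      then have "?b j = 0" unfolding bsol_def by simp
      moreover have "b j = 0" using b False by simp
      ultimately show ?thesis by simp
    qed
  qed
qed


lemma bsol_min:
  assumes "n > 0" "lam > 0"
  shows "ridge_obj n p X y lam (bsol n p X y lam) \<le> ridge_obj n p X y lam b'"
proof -
  have e: "ridge_obj n p X y lam b' = ridge_obj n p X y lam (bsol n p X y lam)
     + ((\<Sum>i<n. (\<Sum>j<p. X i j * (b' j - bsol n p X y lam j))^2) / (2 * real n)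
        + lam / 2 * (\<Sum>j<p. (b' j - bsol n p X y lam j)^2))"
    by (rule bsol_expand[OF assms])
  show ?thesis
    using Q_nonneg[OF assms(2), where d="\<lambda>j. b' j - bsol n p X y lam j" and n=n and p=p and X=X] e
    by linarith
qed

lemma ridge_min:
  assumes "n > 0" "lam > 0"
  shows "ridge_obj n p X y lam (ridge n p X y lam) \<le> ridge_obj n p X y lam b'"
  using bsol_min[OF assms] ridge_eq[OF assms] by simp

lemma obj_shift:
  "ridge_obj n p X y lam' b = ridge_obj n p X y lam b + (lam' - lam) / 2 * (\<Sum>j<p. (b j)^2)"
proof -
  have alg: "\<And>a b S::real. a / 2 * S = b / 2 * S + (a - b) / 2 * S" by (simp add: field_simps)
  show ?thesis unfolding ridge_obj_def using alg[of lam' "\<Sum>j<p. (b j)^2" lam] by linarith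
qed

lemma ridge_norm:
  assumes "n > 0" "lam > 0"
  shows "(\<Sum>j<p. (ridge n p X y lam j)^2) \<le> (\<Sum>i<n. (y i)^2) / (real n * lam)"
proof -
  let ?b = "ridge n p X y lam"
  have "ridge_obj n p X y lam ?b \<le> ridge_obj n p X y lam (\<lambda>_. 0)"
    by (rule ridge_min[OF assms])
  also have "ridge_obj n p X y lam (\<lambda>_. 0) = (\<Sum>i<n. (y i)^2) / (2 * real n)"
    unfolding ridge_obj_def by simp
  finally have 1: "ridge_obj n p X y lam ?b \<le> (\<Sum>i<n. (y i)^2) / (2 * real n)" .
  have "0 \<le> (\<Sum>i<n. (y i - (\<Sum>j<p. X i j * ?b j))^2) / (2 * real n)"
    by (intro divide_nonneg_nonneg sum_nonneg) auto
  then have "lam / 2 * (\<Sum>j<p. (?b j)^2) \<le> (\<Sum>i<n. (y i)^2) / (2 * real n)"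
    using 1 unfolding ridge_obj_def by linarith
  then have "lam * (\<Sum>j<p. (?b j)^2) \<le> (\<Sum>i<n. (y i)^2) / real n"
    by (simp add: field_simps)
  then show ?thesis using assms
    by (simp add: field_simps mult.commute)
qed

lemma cost_eq:
  "costC n p X z \<sigma> \<beta> lam' (what n p X z \<sigma> \<beta> lam)
   = ridge_obj n p X (resp p X \<beta> \<sigma> z) lam' (ridge n p X (resp p X \<beta> \<sigma> z) lam)"
proof -
  let ?r = "ridge n p X (resp p X \<beta> \<sigma> z) lam"
  have alg: "\<And>R B s :: real. (R - B - s)^2 = (B + s - R)^2"
    by (simp add: power2_eq_square algebra_simps)
  have 1: "((\<Sum>j<p. X i j * (?r j - \<beta> j)) - \<sigma> * z i)^2
        = (resp p X \<beta> \<sigma> z i - (\<Sum>j<p. X i j * ?r j))^2" for i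
  proof -
    have r1: "(\<Sum>j<p. X i j * (?r j - \<beta> j)) = (\<Sum>j<p. X i j * ?r j) - (\<Sum>j<p. X i j * \<beta> j)"
      by (simp add: right_diff_distrib sum_subtractf)
    show ?thesis unfolding r1 resp_def by (rule alg)
  qed
  have 2: "(\<lambda>j. what n p X z \<sigma> \<beta> lam j + \<beta> j) = ?r" by (simp add: what_def)
  show ?thesis
    unfolding costC_def ridge_obj_def 1 2 what_def by simp
qed

lemma D_bound:
  assumes n: "n > 0" and lm: "lmin > 0" "lmin \<le> lam" "lmin \<le> lam'"
    and Y: "(\<Sum>i<n. (y i)^2) \<le> real n * M"
  shows "ridge_obj n p X y lam' (ridge n p X y lam)
      \<le> ridge_obj n p X y lam' (ridge n p X y lam') + M / (2 * lmin) * \<bar>lam - lam'\<bar>"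
proof -
  have lam: "lam > 0" "lam' > 0" using lm by auto
  let ?A = "(\<Sum>j<p. (ridge n p X y lam j)^2)"
  let ?B = "(\<Sum>j<p. (ridge n p X y lam' j)^2)"
  have A0: "0 \<le> ?A" and B0: "0 \<le> ?B" by (simp_all add: sum_nonneg)
  have bnd: "(\<Sum>i<n. (y i)^2) / (real n * l) \<le> M / lmin" if "l \<ge> lmin" for l
  proof -
    have "(\<Sum>i<n. (y i)^2) / (real n * l) \<le> (real n * M) / (real n * l)"
      using Y that lm n by (intro divide_right_mono) auto
    also have "\<dots> = M / l" using n by simp
    also have "\<dots> \<le> M / lmin"
    proof -
      have "0 \<le> (\<Sum>i<n. (y i)^2)" by (simp add: sum_nonneg)
      then have "0 \<le> real n * M" using Y by linarith
      then have "0 \<le> M" using n by (simp add: zero_le_mult_iff)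
      then show ?thesis using that lm by (intro divide_left_mono) auto
    qed
    finally show ?thesis .
  qed
  have A: "?A \<le> M / lmin" using ridge_norm[OF n lam(1), where p=p and X=X and y=y] bnd[OF lm(2)] by linarith
  have B: "?B \<le> M / lmin" using ridge_norm[OF n lam(2), where p=p and X=X and y=y] bnd[OF lm(3)] by linarith
  have "ridge_obj n p X y lam' (ridge n p X y lam)
      = ridge_obj n p X y lam (ridge n p X y lam) + (lam' - lam) / 2 * ?A"
    by (rule obj_shift)
  also have "\<dots> \<le> ridge_obj n p X y lam (ridge n p X y lam') + (lam' - lam) / 2 * ?A"
    using ridge_min[OF n lam(1)] by simp
  also have "ridge_obj n p X y lam (ridge n p X y lam') = ridge_obj n p X y lam' (ridge n p X y lam') + (lam - lam') / 2 * ?B"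
    by (rule obj_shift)
  finally have 0: "ridge_obj n p X y lam' (ridge n p X y lam) \<le>
      ridge_obj n p X y lam' (ridge n p X y lam') + (lam - lam') / 2 * ?B + (lam' - lam) / 2 * ?A"
    by simp
  have alg: "\<And>a b A B::real. (a - b)/2*B + (b - a)/2*A = (b - a)*(A-B)/2"
    by (simp add: field_simps)
  have 1: "ridge_obj n p X y lam' (ridge n p X y lam) \<le>
      ridge_obj n p X y lam' (ridge n p X y lam') + (lam' - lam) * (?A - ?B) / 2"
    using 0 alg[of lam lam' ?B ?A] by linarith
  have ab: "\<bar>?A - ?B\<bar> \<le> M / lmin" using A B A0 B0 by linarith
  have "(lam' - lam) * (?A - ?B) \<le> \<bar>(lam' - lam) * (?A - ?B)\<bar>" by (rule abs_ge_self)
  also have "\<dots> = \<bar>lam' - lam\<bar> * \<bar>?A - ?B\<bar>" by (rule abs_mult)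
  also have "\<dots> \<le> \<bar>lam' - lam\<bar> * (M / lmin)" using ab by (intro mult_left_mono) auto
  also have "\<dots> = \<bar>lam - lam'\<bar> * (M / lmin)" by (simp add: abs_minus_commute)
  finally have 2: "(lam' - lam) * (?A - ?B) \<le> \<bar>lam - lam'\<bar> * (M / lmin)" .
  have 3: "\<bar>lam - lam'\<bar> * (M / lmin) / 2 = M / (2 * lmin) * \<bar>lam - lam'\<bar>"
    by (simp add: field_simps)
  have 4: "(lam' - lam) * (?A - ?B) / 2 \<le> \<bar>lam - lam'\<bar> * (M / lmin) / 2"
    using 2 by (rule divide_right_mono) simp
  have "ridge_obj n p X y lam' (ridge n p X y lam) \<le>
      ridge_obj n p X y lam' (ridge n p X y lam') + \<bar>lam - lam'\<bar> * (M / lmin) / 2"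
    using 1 4 by (rule order_trans[OF _ add_left_mono])
  then show ?thesis unfolding 3 .
qed


lemma det_expl:
  assumes "B \<in> carrier_mat m m"
  shows "Determinant.det B = (\<Sum>\<pi> | \<pi> permutes {0..<m}. of_int (sign \<pi>) * (\<Prod>i = 0..<m. B $$ (i, \<pi> i)))"
proof -
  have "dim_row B = m" "dim_col B = m" using assms by auto
  then show ?thesis unfolding Determinant.det_def by (simp only: simp_thms if_True)
qed

lemma perm_lt: "\<pi> \<in> {\<pi>. \<pi> permutes {0..<m}} \<Longrightarrow> i \<in> {0..<m} \<Longrightarrow> \<pi> i < m"
  using permutes_in_image[of \<pi> "{0..<m}" i] by auto

lemma det_meas:
  fixes B :: "'a \<Rightarrow> real Matrix.mat"
  assumes "\<And>\<omega>. B \<omega> \<in> carrier_mat m m"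
    "\<And>i k. i < m \<Longrightarrow> k < m \<Longrightarrow> (\<lambda>\<omega>. B \<omega> $$ (i,k)) \<in> borel_measurable M"
  shows "(\<lambda>\<omega>. Determinant.det (B \<omega>)) \<in> borel_measurable M"
proof -
  have "(\<lambda>\<omega>. \<Sum>\<pi>\<in>{\<pi>. \<pi> permutes {0..<m}}. of_int (sign \<pi>) * (\<Prod>i = 0..<m. B \<omega> $$ (i, \<pi> i))) \<in> borel_measurable M"
  proof (intro borel_measurable_sum borel_measurable_times borel_measurable_const borel_measurable_prod)
    fix \<pi> i assume a: "\<pi> \<in> {\<pi>. \<pi> permutes {0..<m}}" "i \<in> {0..<m}"
    then have "\<pi> i < m" by (rule perm_lt)
    then show "(\<lambda>\<omega>. B \<omega> $$ (i, \<pi> i)) \<in> borel_measurable M" using assms(2) a(2) by auto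
  qed
  then show ?thesis using det_expl[OF assms(1)] by simp
qed

lemma det_lim:
  fixes B :: "'a \<Rightarrow> real Matrix.mat"
  assumes "\<And>x. B x \<in> carrier_mat m m" "C \<in> carrier_mat m m"
    "\<And>i k. i < m \<Longrightarrow> k < m \<Longrightarrow> ((\<lambda>x. B x $$ (i,k)) \<longlongrightarrow> C $$ (i,k)) F"
  shows "((\<lambda>x. Determinant.det (B x)) \<longlongrightarrow> Determinant.det C) F"
proof -
  have "((\<lambda>x. \<Sum>\<pi>\<in>{\<pi>. \<pi> permutes {0..<m}}. of_int (sign \<pi>) * (\<Prod>i = 0..<m. B x $$ (i, \<pi> i)))
     \<longlongrightarrow> (\<Sum>\<pi>\<in>{\<pi>. \<pi> permutes {0..<m}}. of_int (sign \<pi>) * (\<Prod>i = 0..<m. C $$ (i, \<pi> i)))) F"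
  proof (intro tendsto_sum tendsto_mult tendsto_const tendsto_prod)
    fix \<pi> i assume a: "\<pi> \<in> {\<pi>. \<pi> permutes {0..<m}}" "i \<in> {0..<m}"
    then have "\<pi> i < m" by (rule perm_lt)
    then show "((\<lambda>x. B x $$ (i, \<pi> i)) \<longlongrightarrow> C $$ (i, \<pi> i)) F" using assms(3) a(2) by auto
  qed
  then show ?thesis using det_expl[OF assms(1)] det_expl[OF assms(2)] by simp
qed

lemma adj_entry:
  assumes "A \<in> carrier_mat p p" "j < p" "k < p"
  shows "adj_mat A $$ (j,k) = (-1)^(k+j) * Determinant.det (mat_delete A k j)"
  using assms by (simp add: adj_mat_def cofactor_def)

lemma md_entry:
  assumes "A \<in> carrier_mat p p" "a < p - 1" "c < p - 1"
  shows "mat_delete A k j $$ (a,c) = A $$ (if a < k then a else Suc a, if c < j then c else Suc c)"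
  using assms by (simp add: mat_delete_def)

lemma md_carrier: "A \<in> carrier_mat p p \<Longrightarrow> mat_delete A k j \<in> carrier_mat (p - 1) (p - 1)"
  by (rule mat_delete_carrier)

lemma Am_entry: "j < p \<Longrightarrow> k < p \<Longrightarrow> Am n p X lam $$ (j,k) = Gm n X j k + (if j = k then lam else 0)"
  by (simp add: Am_def)

lemma sh_lt: "a < p - 1 \<Longrightarrow> (if a < k then a else Suc a) < (p::nat)"
  by auto

lemma Am_md_entry:
  assumes "a < p - 1" "c < p - 1"
  shows "mat_delete (Am n p X lam) k j $$ (a,c) =
     Gm n X (if a < k then a else Suc a) (if c < j then c else Suc c)
     + (if (if a < k then a else Suc a) = (if c < j then c else Suc c) then lam else 0)"
  using assms md_entry[OF Am_carrier assms] Am_entry[OF sh_lt[OF assms(1)] sh_lt[OF assms(2)]] by simp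

lemma bsol_lim:
  assumes lam: "lam > 0" and l: "(l \<longlongrightarrow> lam) F"
  shows "((\<lambda>x. bsol n p X y (l x) j) \<longlongrightarrow> bsol n p X y lam j) F"
proof (cases "j < p")
  case False then show ?thesis by (simp add: bsol_def)
next
  case True
  have ent: "((\<lambda>x. Gm n X a c + (if a = c then l x else 0)) \<longlongrightarrow> Gm n X a c + (if a = c then lam else 0)) F" for a c
    by (cases "a = c") (auto intro!: tendsto_intros l)
  have detl: "((\<lambda>x. Determinant.det (Am n p X (l x))) \<longlongrightarrow> Determinant.det (Am n p X lam)) F"
    by (rule det_lim[OF Am_carrier Am_carrier]) (simp add: Am_entry ent)
  have adjl: "((\<lambda>x. adj_mat (Am n p X (l x)) $$ (j,k)) \<longlongrightarrow> adj_mat (Am n p X lam) $$ (j,k)) F"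
    if k: "k < p" for k
  proof -
    have "((\<lambda>x. (-1)^(k+j) * Determinant.det (mat_delete (Am n p X (l x)) k j))
        \<longlongrightarrow> (-1)^(k+j) * Determinant.det (mat_delete (Am n p X lam) k j)) F"
      by (intro tendsto_mult tendsto_const det_lim[OF md_carrier[OF Am_carrier] md_carrier[OF Am_carrier]])
         (simp add: Am_md_entry ent)
    then show ?thesis using adj_entry[OF Am_carrier True k] by simp
  qed
  have "((\<lambda>x. (\<Sum>k<p. adj_mat (Am n p X (l x)) $$ (j,k) * rv n X y k) / Determinant.det (Am n p X (l x)))
     \<longlongrightarrow> (\<Sum>k<p. adj_mat (Am n p X lam) $$ (j,k) * rv n X y k) / Determinant.det (Am n p X lam)) F"
    by (intro tendsto_divide tendsto_sum tendsto_mult tendsto_const adjl detl det_Am_nz[OF lam]) auto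
  then show ?thesis using True by (simp add: bsol_def)
qed

lemma bsol_meas:
  assumes G: "\<And>j k. (\<lambda>\<omega>. Gm n (Xw \<omega>) j k) \<in> borel_measurable M"
    and R: "\<And>k. (\<lambda>\<omega>. rv n (Xw \<omega>) (yw \<omega>) k) \<in> borel_measurable M"
  shows "(\<lambda>\<omega>. bsol n p (Xw \<omega>) (yw \<omega>) lam j) \<in> borel_measurable M"
proof (cases "j < p")
  case False then show ?thesis by (simp add: bsol_def)
next
  case True
  have ent: "(\<lambda>\<omega>. Gm n (Xw \<omega>) a c + (if a = c then lam else 0)) \<in> borel_measurable M" for a c
    using G by simp
  have detm: "(\<lambda>\<omega>. Determinant.det (Am n p (Xw \<omega>) lam)) \<in> borel_measurable M"
    by (rule det_meas[OF Am_carrier]) (simp add: Am_entry ent)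
  have adjm: "(\<lambda>\<omega>. adj_mat (Am n p (Xw \<omega>) lam) $$ (j,k)) \<in> borel_measurable M"
    if k: "k < p" for k
  proof -
    have "(\<lambda>\<omega>. (-1)^(k+j) * Determinant.det (mat_delete (Am n p (Xw \<omega>) lam) k j)) \<in> borel_measurable M"
      by (intro borel_measurable_times borel_measurable_const det_meas[OF md_carrier[OF Am_carrier]])
         (simp add: Am_md_entry ent)
    then show ?thesis using adj_entry[OF Am_carrier True k] by simp
  qed
  have "(\<lambda>\<omega>. (\<Sum>k<p. adj_mat (Am n p (Xw \<omega>) lam) $$ (j,k) * rv n (Xw \<omega>) (yw \<omega>) k) / Determinant.det (Am n p (Xw \<omega>) lam)) \<in> borel_measurable M"
    by (intro borel_measurable_divide borel_measurable_sum borel_measurable_times adjm R detm) auto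
  then show ?thesis using True by (simp add: bsol_def)
qed


lemma N01_prob: "prob_space N01"
  unfolding N01_def by (rule prob_space_normal_density) simp

lemma sets_N01[simp, measurable_cong]: "sets N01 = sets borel"
  unfolding N01_def by simp

lemma space_N01[simp]: "space N01 = UNIV"
  unfolding N01_def by simp

lemma PM_prob: "prob_space (PiM I (\<lambda>_. N01))"
  by (rule prob_space_PiM) (rule N01_prob)

lemma coord_meas_N01: "(\<lambda>\<omega>. \<omega> k) \<in> measurable (PiM I (\<lambda>_. N01)) N01"
proof (cases "k \<in> I")
  case True then show ?thesis by (rule measurable_component_singleton)
next
  case False
  have c: "(\<lambda>\<omega>. undefined) \<in> measurable (PiM I (\<lambda>_. N01)) N01" by simp
  have eq: "\<And>\<omega>. \<omega> \<in> space (PiM I (\<lambda>_. N01)) \<Longrightarrow> \<omega> k = undefined"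
    using False by (auto simp: space_PiM PiE_def extensional_def)
  have "(\<lambda>\<omega>. \<omega> k) \<in> measurable (PiM I (\<lambda>_. N01)) N01 \<longleftrightarrow> (\<lambda>\<omega>. undefined) \<in> measurable (PiM I (\<lambda>_. N01)) N01"
    by (rule measurable_cong) (rule eq)
  then show ?thesis using c by simp
qed

lemma coord_meas[measurable]: "(\<lambda>\<omega>. \<omega> k) \<in> borel_measurable (PiM I (\<lambda>_. N01))"
  using coord_meas_N01[of k I] measurable_cong_sets[OF refl sets_N01, of "PiM I (\<lambda>_. N01)"] by simp

lemma coord_indep:
  assumes "I \<noteq> {}"
  shows "prob_space.indep_vars (PiM I (\<lambda>_. N01)) (\<lambda>_. N01) (\<lambda>k \<omega>. \<omega> k) I"
proof -
  interpret prob_space "PiM I (\<lambda>_. N01)" by (rule PM_prob)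
  have "distr (PiM I (\<lambda>_. N01)) (PiM I (\<lambda>_. N01)) (\<lambda>x. \<lambda>i\<in>I. x i) = distr (PiM I (\<lambda>_. N01)) (PiM I (\<lambda>_. N01)) (\<lambda>x. x)"
    by (rule distr_cong) (auto simp: space_PiM PiE_def extensional_def restrict_def)
  also have "\<dots> = PiM I (\<lambda>_. N01)" by simp
  also have "\<dots> = PiM I (\<lambda>i. distr (PiM I (\<lambda>_. N01)) N01 (\<lambda>\<omega>. \<omega> i))"
    by (rule PiM_cong) (auto simp: distr_PiM_component[OF N01_prob])
  finally show ?thesis
    by (subst indep_vars_iff_distr_eq_PiM'[OF assms]) (auto intro: coord_meas_N01)
qed

lemma coord_distr:
  assumes "k \<in> I"
  shows "distributed (PiM I (\<lambda>_. N01)) lborel (\<lambda>\<omega>. \<omega> k) (\<lambda>x. ennreal (std_normal_density x))"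
  unfolding distributed_def
proof (intro conjI)
  have "distr (PiM I (\<lambda>_. N01)) lborel (\<lambda>\<omega>. \<omega> k) = distr (PiM I (\<lambda>_. N01)) N01 (\<lambda>\<omega>. \<omega> k)"
    by (rule distr_cong) auto
  also have "\<dots> = N01" by (rule distr_PiM_component[OF N01_prob assms])
  finally show "distr (PiM I (\<lambda>_. N01)) lborel (\<lambda>\<omega>. \<omega> k) = density lborel (\<lambda>x. ennreal (std_normal_density x))"
    by (simp add: N01_def)
  show "(\<lambda>\<omega>. \<omega> k) \<in> measurable (PiM I (\<lambda>_. N01)) lborel"
    using coord_meas[of k I] by simp
qed simp

lemma lin_gauss:
  fixes c :: "'i \<Rightarrow> real" and I J :: "'i set"
  assumes fin: "finite I" and JI: "J \<subseteq> I"
  shows "integrable (PiM I (\<lambda>_. N01)) (\<lambda>\<omega>. (\<Sum>k\<in>J. c k * \<omega> k)^4)"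
    and "integrable (PiM I (\<lambda>_. N01)) (\<lambda>\<omega>. (\<Sum>k\<in>J. c k * \<omega> k)^2)"
    and "(\<integral>\<omega>. (\<Sum>k\<in>J. c k * \<omega> k)^2 \<partial>PiM I (\<lambda>_. N01)) = (\<Sum>k\<in>J. (c k)^2)"
    and "(\<integral>\<omega>. (\<Sum>k\<in>J. c k * \<omega> k)^4 \<partial>PiM I (\<lambda>_. N01)) = 3 * (\<Sum>k\<in>J. (c k)^2)^2"
proof -
  let ?M = "PiM I (\<lambda>_. N01)"
  interpret P: prob_space ?M by (rule PM_prob)
  define J' where "J' = {k\<in>J. c k \<noteq> 0}"
  have finJ: "finite J" using fin JI finite_subset by blast
  have J'J: "J' \<subseteq> J" by (auto simp: J'_def)
  have finJ': "finite J'" using finJ J'J finite_subset by blast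
  have sumL: "(\<Sum>k\<in>J. c k * \<omega> k) = (\<Sum>k\<in>J'. c k * \<omega> k)" for \<omega>
    by (rule sum.mono_neutral_right[OF finJ J'J]) (auto simp: J'_def)
  have sumS: "(\<Sum>k\<in>J. (c k)^2) = (\<Sum>k\<in>J'. (c k)^2)"
    by (rule sum.mono_neutral_right[OF finJ J'J]) (auto simp: J'_def)
  define S where "S = (\<Sum>k\<in>J'. (c k)^2)"
  have main: "integrable ?M (\<lambda>\<omega>. (\<Sum>k\<in>J'. c k * \<omega> k)^4) \<and> integrable ?M (\<lambda>\<omega>. (\<Sum>k\<in>J'. c k * \<omega> k)^2)
     \<and> (\<integral>\<omega>. (\<Sum>k\<in>J'. c k * \<omega> k)^2 \<partial>?M) = S \<and> (\<integral>\<omega>. (\<Sum>k\<in>J'. c k * \<omega> k)^4 \<partial>?M) = 3 * S^2"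
  proof (cases "J' = {}")
    case True then show ?thesis by (simp add: S_def)
  next
    case False
    have Spos: "S > 0" unfolding S_def
      using finJ' False by (intro sum_pos) (auto simp: J'_def)
    define s where "s = sqrt S"
    have spos: "s > 0" using Spos by (simp add: s_def)
    have s2: "s^2 = S" using Spos by (simp add: s_def)
    have Ine: "I \<noteq> {}" using False J'J JI by blast
    have ind0: "P.indep_vars (\<lambda>_. N01) (\<lambda>k \<omega>. \<omega> k) J'"
      using P.indep_vars_subset[OF coord_indep[OF Ine]] J'J JI by blast
    have mm: "(\<lambda>x. c i * x) \<in> borel_measurable N01" for i
      unfolding measurable_cong_sets[OF sets_N01 refl] by simp
    have ind: "P.indep_vars (\<lambda>_. borel) (\<lambda>k \<omega>. c k * \<omega> k) J'"
      using P.indep_vars_compose2[OF ind0, of "\<lambda>k x. c k * x" "\<lambda>_. borel"] mm by simp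
    have dk: "distributed ?M lborel (\<lambda>\<omega>. c k * \<omega> k) (\<lambda>x. ennreal (normal_density 0 \<bar>c k\<bar> x))"
      if k: "k \<in> J'" for k
    proof -
      have ck: "c k \<noteq> 0" using k by (simp add: J'_def)
      have kI: "k \<in> I" using k J'J JI by blast
      show ?thesis
        using P.normal_density_affine[OF coord_distr[OF kI], where \<alpha>="c k" and \<beta>=0] ck by simp
    qed
    have D: "distributed ?M lborel (\<lambda>\<omega>. \<Sum>k\<in>J'. c k * \<omega> k) (\<lambda>x. ennreal (normal_density 0 s x))"
    proof -
      have "distributed ?M lborel (\<lambda>\<omega>. \<Sum>k\<in>J'. c k * \<omega> k)
          (\<lambda>x. ennreal (normal_density (\<Sum>k\<in>J'. 0) (sqrt (\<Sum>k\<in>J'. (\<bar>c k\<bar>)^2)) x))"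
        by (rule P.sum_indep_normal[OF finJ' False ind _ dk]) (auto simp: J'_def)
      then show ?thesis by (simp add: s_def S_def)
    qed
    have m2: "has_bochner_integral lborel (\<lambda>x. normal_density 0 s x * x^2) S"
      using normal_moment_even[OF spos, where k=1 and \<mu>=0] s2 by simp
    have m4: "has_bochner_integral lborel (\<lambda>x. normal_density 0 s x * x^4) (3 * S^2)"
    proof -
      have "has_bochner_integral lborel (\<lambda>x. normal_density 0 s x * (x - 0)^(2*2)) (fact (2*2) / ((2 / s^2)^2 * fact 2))"
        by (rule normal_moment_even[OF spos])
      moreover have "fact (2*2) / ((2 / s^2)^2 * fact 2) = (3 * S^2 :: real)"
        using spos by (simp add: s2[symmetric] fact_numeral field_simps power2_eq_square power4_eq_xxxx)
      ultimately show ?thesis by simp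
    qed
    have nn: "\<And>x. x \<in> space lborel \<Longrightarrow> 0 \<le> normal_density 0 s x" by (simp add: normal_density_nonneg)
    have i4: "integrable ?M (\<lambda>\<omega>. (\<Sum>k\<in>J'. c k * \<omega> k)^4)"
    proof -
      have "integrable lborel (\<lambda>x. normal_density 0 s x * x^4)" by (rule integrable.intros[OF m4])
      then show ?thesis using distributed_integrable[OF D, of "\<lambda>x. x^4"] nn by simp
    qed
    have i2: "integrable ?M (\<lambda>\<omega>. (\<Sum>k\<in>J'. c k * \<omega> k)^2)"
    proof -
      have "integrable lborel (\<lambda>x. normal_density 0 s x * x^2)" by (rule integrable.intros[OF m2])
      then show ?thesis using distributed_integrable[OF D, of "\<lambda>x. x^2"] nn by simp
    qed
    have e2: "(\<integral>\<omega>. (\<Sum>k\<in>J'. c k * \<omega> k)^2 \<partial>?M) = S"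
      using distributed_integral[OF D, of "\<lambda>x. x^2"] nn m2 by (simp add: has_bochner_integral_integral_eq)
    have e4: "(\<integral>\<omega>. (\<Sum>k\<in>J'. c k * \<omega> k)^4 \<partial>?M) = 3 * S^2"
      using distributed_integral[OF D, of "\<lambda>x. x^4"] nn m4 by (simp add: has_bochner_integral_integral_eq)
    show ?thesis using i4 i2 e2 e4 by blast
  qed
  show "integrable ?M (\<lambda>\<omega>. (\<Sum>k\<in>J. c k * \<omega> k)^4)"
    "integrable ?M (\<lambda>\<omega>. (\<Sum>k\<in>J. c k * \<omega> k)^2)"
    "(\<integral>\<omega>. (\<Sum>k\<in>J. c k * \<omega> k)^2 \<partial>?M) = (\<Sum>k\<in>J. (c k)^2)"
    "(\<integral>\<omega>. (\<Sum>k\<in>J. c k * \<omega> k)^4 \<partial>?M) = 3 * (\<Sum>k\<in>J. (c k)^2)^2"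
    using main unfolding sumL sumS S_def by auto
qed


definition blk :: "nat \<Rightarrow> nat \<Rightarrow> ((nat \<times> nat) + nat) set" where
  "blk i p = insert (Inr i) ((\<lambda>j. Inl (i, j)) ` {..<p})"

definition cf :: "(nat \<Rightarrow> real) \<Rightarrow> real \<Rightarrow> ((nat \<times> nat) + nat) \<Rightarrow> real" where
  "cf \<beta> \<sigma> k = (case k of Inl ij \<Rightarrow> \<beta> (snd ij) | Inr _ \<Rightarrow> \<sigma>)"

lemma blk_fin: "finite (blk i p)" by (simp add: blk_def)

lemma blk_sum: "(\<Sum>k\<in>blk i p. f k) = f (Inr i) + (\<Sum>j<p. f (Inl (i, j)))"
proof -
  have "Inr i \<notin> (\<lambda>j. Inl (i, j)) ` {..<p}" by auto
  moreover have "inj_on (\<lambda>j. Inl (i, j) :: (nat \<times> nat) + nat) {..<p}" by (auto simp: inj_on_def)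
  ultimately show ?thesis unfolding blk_def by (simp add: sum.reindex)
qed

lemma resp_blk: "resp p (Xof \<omega>) \<beta> \<sigma> (zof \<omega>) i = (\<Sum>k\<in>blk i p. cf \<beta> \<sigma> k * \<omega> k)"
  unfolding blk_sum resp_def Xof_def zof_def cf_def by (simp add: mult.commute)

lemma cf_sq: "(\<Sum>k\<in>blk i p. (cf \<beta> \<sigma> k)^2) = (\<Sum>j<p. (\<beta> j)^2) + \<sigma>^2"
  unfolding blk_sum cf_def by simp

lemma blk_sub: "i < n \<Longrightarrow> blk i p \<subseteq> gauss_idx n p"
  by (auto simp: blk_def gauss_idx_def)

lemma blk_disj: "i \<noteq> i' \<Longrightarrow> blk i p \<inter> blk i' p = {}"
  by (auto simp: blk_def)

lemma gidx_fin: "finite (gauss_idx n p)" by (simp add: gauss_idx_def)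

lemma gidx_ne: "i < n \<Longrightarrow> gauss_idx n p \<noteq> {}" by (auto simp: gauss_idx_def)

context
  fixes n p :: nat and \<beta> :: "nat \<Rightarrow> real" and \<sigma> :: real
begin

abbreviation "GM \<equiv> PiM (gauss_idx n p) (\<lambda>_. N01)"
abbreviation "s2 \<equiv> (\<Sum>j<p. (\<beta> j)^2) + \<sigma>^2"
definition "Yr i \<omega> = (\<Sum>k\<in>blk i p. cf \<beta> \<sigma> k * \<omega> k)"
definition "Wr i \<omega> = (Yr i \<omega>)^2 - s2"

lemma Yr_meas[measurable]: "Yr i \<in> borel_measurable GM"
  unfolding Yr_def by measurable

lemma Wr_meas[measurable]: "Wr i \<in> borel_measurable GM"
  unfolding Wr_def by measurable

lemma row_mom:
  assumes "i < n"
  shows "integrable GM (\<lambda>\<omega>. (Yr i \<omega>)^4)" "integrable GM (\<lambda>\<omega>. (Yr i \<omega>)^2)"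
    "(\<integral>\<omega>. (Yr i \<omega>)^2 \<partial>GM) = s2" "(\<integral>\<omega>. (Yr i \<omega>)^4 \<partial>GM) = 3 * s2^2"
  using lin_gauss[OF gidx_fin blk_sub[OF assms], where c="cf \<beta> \<sigma>"]
  unfolding Yr_def cf_sq by auto

lemma Wr_int: "i < n \<Longrightarrow> integrable GM (Wr i)"
proof -
  interpret prob_space GM by (rule PM_prob)
  assume "i < n"
  then show ?thesis unfolding Wr_def using row_mom(2)[of i] by auto
qed

lemma Wr_mean: "i < n \<Longrightarrow> (\<integral>\<omega>. Wr i \<omega> \<partial>GM) = 0"
proof -
  interpret prob_space GM by (rule PM_prob)
  assume i: "i < n"
  show ?thesis unfolding Wr_def using row_mom(2,3)[OF i] by (simp add: prob_space)
qed

lemma Wr_sq: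
  assumes i: "i < n"
  shows "integrable GM (\<lambda>\<omega>. Wr i \<omega> * Wr i \<omega>)" "(\<integral>\<omega>. Wr i \<omega> * Wr i \<omega> \<partial>GM) = 2 * s2^2"
proof -
  interpret prob_space GM by (rule PM_prob)
  have eq: "(\<lambda>\<omega>. Wr i \<omega> * Wr i \<omega>) = (\<lambda>\<omega>. (Yr i \<omega>)^4 - 2 * s2 * (Yr i \<omega>)^2 + s2^2)"
    by (rule ext) (simp add: Wr_def power2_eq_square power4_eq_xxxx algebra_simps)
  show "integrable GM (\<lambda>\<omega>. Wr i \<omega> * Wr i \<omega>)"
    unfolding eq using row_mom(1,2)[OF i] by auto
  show "(\<integral>\<omega>. Wr i \<omega> * Wr i \<omega> \<partial>GM) = 2 * s2^2"
    unfolding eq using row_mom[OF i] by (simp add: prob_space power2_eq_square)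
qed

lemma Wr_cross:
  assumes i: "i < n" and i': "i' < n" and ne: "i \<noteq> i'"
  shows "integrable GM (\<lambda>\<omega>. Wr i \<omega> * Wr i' \<omega>)" "(\<integral>\<omega>. Wr i \<omega> * Wr i' \<omega> \<partial>GM) = 0"
proof -
  interpret prob_space GM by (rule PM_prob)
  let ?A = "blk i p" and ?B = "blk i' p"
  have ind0: "indep_var (PiM ?A (\<lambda>_. N01)) (\<lambda>\<omega>. restrict (\<lambda>k. \<omega> k) ?A) (PiM ?B (\<lambda>_. N01)) (\<lambda>\<omega>. restrict (\<lambda>k. \<omega> k) ?B)"
    by (rule indep_var_restrict[OF coord_indep[OF gidx_ne[OF i]] blk_disj[OF ne] blk_sub[OF i] blk_sub[OF i']])
  define g1 where "g1 f = (\<Sum>k\<in>?A. cf \<beta> \<sigma> k * f k)^2 - s2" for f :: "(nat \<times> nat) + nat \<Rightarrow> real"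
  define g2 where "g2 f = (\<Sum>k\<in>?B. cf \<beta> \<sigma> k * f k)^2 - s2" for f :: "(nat \<times> nat) + nat \<Rightarrow> real"
  have g1m: "g1 \<in> borel_measurable (PiM ?A (\<lambda>_. N01))" unfolding g1_def by measurable
  have g2m: "g2 \<in> borel_measurable (PiM ?B (\<lambda>_. N01))" unfolding g2_def by measurable
  have ind: "indep_var borel (g1 \<circ> (\<lambda>\<omega>. restrict (\<lambda>k. \<omega> k) ?A)) borel (g2 \<circ> (\<lambda>\<omega>. restrict (\<lambda>k. \<omega> k) ?B))"
    by (rule indep_var_compose[OF ind0 g1m g2m])
  have e1: "g1 \<circ> (\<lambda>\<omega>. restrict (\<lambda>k. \<omega> k) ?A) = Wr i"
    by (rule ext) (simp add: g1_def Wr_def Yr_def)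
  have e2: "g2 \<circ> (\<lambda>\<omega>. restrict (\<lambda>k. \<omega> k) ?B) = Wr i'"
    by (rule ext) (simp add: g2_def Wr_def Yr_def)
  have ind': "indep_var borel (Wr i) borel (Wr i')" using ind unfolding e1 e2 .
  show "integrable GM (\<lambda>\<omega>. Wr i \<omega> * Wr i' \<omega>)"
    by (rule indep_var_integrable[OF ind' Wr_int[OF i] Wr_int[OF i']])
  show "(\<integral>\<omega>. Wr i \<omega> * Wr i' \<omega> \<partial>GM) = 0"
    using indep_var_lebesgue_integral[OF ind' Wr_int[OF i] Wr_int[OF i']] Wr_mean[OF i] by simp
qed

lemma sumW_sq:
  shows "integrable GM (\<lambda>\<omega>. (\<Sum>i<n. Wr i \<omega>)^2)" "(\<integral>\<omega>. (\<Sum>i<n. Wr i \<omega>)^2 \<partial>GM) = 2 * real n * s2^2"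
proof -
  have eq: "(\<lambda>\<omega>. (\<Sum>i<n. Wr i \<omega>)^2) = (\<lambda>\<omega>. \<Sum>i<n. \<Sum>i'<n. Wr i \<omega> * Wr i' \<omega>)"
    by (rule ext) (simp add: power2_eq_square sum_product)
  have int: "integrable GM (\<lambda>\<omega>. Wr i \<omega> * Wr i' \<omega>)" if "i < n" "i' < n" for i i'
    using that Wr_sq(1) Wr_cross(1) by (cases "i = i'") auto
  have val: "(\<integral>\<omega>. Wr i \<omega> * Wr i' \<omega> \<partial>GM) = (if i' = i then 2 * s2^2 else 0)" if "i < n" "i' < n" for i i'
    using that Wr_sq(2) Wr_cross(2) by (cases "i = i'") auto
  have int1: "integrable GM (\<lambda>\<omega>. \<Sum>i'<n. Wr i \<omega> * Wr i' \<omega>)" if "i < n" for i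
  proof (rule Bochner_Integration.integrable_sum)
    fix i' assume "i' \<in> {..<n}" then show "integrable GM (\<lambda>\<omega>. Wr i \<omega> * Wr i' \<omega>)" using int that by auto
  qed
  show "integrable GM (\<lambda>\<omega>. (\<Sum>i<n. Wr i \<omega>)^2)"
    unfolding eq by (rule Bochner_Integration.integrable_sum) (use int1 in auto)
  have "(\<integral>\<omega>. (\<Sum>i<n. Wr i \<omega>)^2 \<partial>GM) = (\<Sum>i<n. (\<integral>\<omega>. (\<Sum>i'<n. Wr i \<omega> * Wr i' \<omega>) \<partial>GM))"
    unfolding eq by (rule Bochner_Integration.integral_sum) (use int1 in auto)
  also have "\<dots> = (\<Sum>i<n. \<Sum>i'<n. (\<integral>\<omega>. Wr i \<omega> * Wr i' \<omega> \<partial>GM))"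
  proof (rule sum.cong[OF refl])
    fix i assume i: "i \<in> {..<n}"
    show "(\<integral>\<omega>. (\<Sum>i'<n. Wr i \<omega> * Wr i' \<omega>) \<partial>GM) = (\<Sum>i'<n. (\<integral>\<omega>. Wr i \<omega> * Wr i' \<omega> \<partial>GM))"
      by (rule Bochner_Integration.integral_sum) (use int i in auto)
  qed
  also have "\<dots> = (\<Sum>i<n. \<Sum>i'<n. (if i' = i then 2 * s2^2 else 0))"
    by (intro sum.cong refl) (simp add: val)
  also have "\<dots> = 2 * real n * s2^2" by simp
  finally show "(\<integral>\<omega>. (\<Sum>i<n. Wr i \<omega>)^2 \<partial>GM) = 2 * real n * s2^2" .
qed

lemma tail:
  assumes a: "a > 0"
  shows "measure GM {\<omega> \<in> space GM. a \<le> \<bar>\<Sum>i<n. Wr i \<omega>\<bar>} \<le> 2 * real n * s2^2 / a^2"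
proof -
  interpret prob_space GM by (rule PM_prob)
  have "measure GM {\<omega> \<in> space GM. \<bar>\<Sum>i<n. Wr i \<omega>\<bar> \<ge> a} \<le> (\<integral>\<omega>. (\<Sum>i<n. Wr i \<omega>)^2 \<partial>GM) / a^2"
    by (rule second_moment_method[OF _ sumW_sq(1) a]) measurable
  then show ?thesis using sumW_sq(2) by simp
qed

lemma tail_resp:
  assumes n: "n > 0" and M: "M > s2"
  shows "measure (gauss_meas n p) {\<omega> \<in> space (gauss_meas n p). real n * M < (\<Sum>i<n. (resp p (Xof \<omega>) \<beta> \<sigma> (zof \<omega>) i)^2)}
     \<le> 2 * s2^2 / (real n * (M - s2)^2)"
proof -
  interpret prob_space GM by (rule PM_prob)
  define a where "a = real n * (M - s2)"
  have a: "a > 0" using n M by (simp add: a_def)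
  have sW: "(\<Sum>i<n. Wr i \<omega>) = (\<Sum>i<n. (resp p (Xof \<omega>) \<beta> \<sigma> (zof \<omega>) i)^2) - real n * s2" for \<omega>
    by (simp add: Wr_def Yr_def resp_blk sum_subtractf)
  have sub: "{\<omega> \<in> space GM. real n * M < (\<Sum>i<n. (resp p (Xof \<omega>) \<beta> \<sigma> (zof \<omega>) i)^2)}
      \<subseteq> {\<omega> \<in> space GM. a \<le> \<bar>\<Sum>i<n. Wr i \<omega>\<bar>}"
    unfolding sW a_def by (auto simp: algebra_simps)
  have meas: "{\<omega> \<in> space GM. a \<le> \<bar>\<Sum>i<n. Wr i \<omega>\<bar>} \<in> sets GM" by measurable
  have "measure GM {\<omega> \<in> space GM. real n * M < (\<Sum>i<n. (resp p (Xof \<omega>) \<beta> \<sigma> (zof \<omega>) i)^2)}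
      \<le> measure GM {\<omega> \<in> space GM. a \<le> \<bar>\<Sum>i<n. Wr i \<omega>\<bar>}"
    by (rule finite_measure_mono[OF sub meas])
  also have "\<dots> \<le> 2 * real n * s2^2 / a^2" by (rule tail[OF a])
  also have "\<dots> = 2 * s2^2 / (real n * (M - s2)^2)"
  proof -
    have alg: "\<And>nn ss d::real. nn > 0 \<Longrightarrow> d \<noteq> 0 \<Longrightarrow> 2 * nn * ss^2 / (nn * d)^2 = 2 * ss^2 / (nn * d^2)"
      by (simp add: power2_eq_square field_simps)
    show ?thesis unfolding a_def by (rule alg) (use n M in auto)
  qed
  finally show ?thesis unfolding gauss_meas_def .
qed

end


lemma grid_lim:
  fixes a b lam :: real
  assumes "a \<le> lam" "lam \<le> b"
  shows "\<exists>k. (\<forall>m. k m \<le> Suc m) \<and> (\<lambda>m. a + (b - a) * (real (k m) / real (Suc m))) \<longlonglongrightarrow> lam"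
proof -
  define t where "t = (if b = a then 0 else (lam - a) / (b - a))"
  have t0: "0 \<le> t" and t1: "t \<le> 1" using assms by (auto simp: t_def field_simps)
  have lt: "lam = a + (b - a) * t" using assms by (auto simp: t_def field_simps)
  define k where "k m = nat \<lfloor>real (Suc m) * t\<rfloor>" for m
  have kr: "real (k m) = of_int \<lfloor>real (Suc m) * t\<rfloor>" for m
    using t0 by (simp add: k_def)
  have kle: "k m \<le> Suc m" for m
  proof -
    have "of_int \<lfloor>real (Suc m) * t\<rfloor> \<le> real (Suc m) * t" by (rule of_int_floor_le)
    also have "\<dots> \<le> real (Suc m)" using t1 by (simp add: mult_left_le)
    finally have "real (k m) \<le> real (Suc m)" using kr by simp
    then show ?thesis by linarith
  qed
  have up: "real (k m) / real (Suc m) \<le> t" for m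
  proof -
    have "real (k m) \<le> real (Suc m) * t" using kr of_int_floor_le by metis
    then show ?thesis by (simp add: field_simps)
  qed
  have lo: "t - 1 / real (Suc m) \<le> real (k m) / real (Suc m)" for m
  proof -
    have "real (Suc m) * t < real (k m) + 1" using kr real_of_int_floor_add_one_gt by metis
    then have "real (Suc m) * t - 1 \<le> real (k m)" by linarith
    then have "(real (Suc m) * t - 1) / real (Suc m) \<le> real (k m) / real (Suc m)"
      by (rule divide_right_mono) simp
    moreover have "(real (Suc m) * t - 1) / real (Suc m) = t - 1 / real (Suc m)"
      by (simp add: field_simps)
    ultimately show ?thesis by simp
  qed
  have l1: "(\<lambda>m. t - 1 / real (Suc m)) \<longlonglongrightarrow> t"
  proof -
    have "(\<lambda>m. 1 / real (Suc m)) \<longlonglongrightarrow> 0" using LIMSEQ_inverse_real_of_nat by (simp add: inverse_eq_divide)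
    then show ?thesis using tendsto_diff[OF tendsto_const, of "\<lambda>m. 1 / real (Suc m)" 0 sequentially t] by simp
  qed
  have "(\<lambda>m. real (k m) / real (Suc m)) \<longlonglongrightarrow> t"
    by (rule tendsto_sandwich[OF always_eventually always_eventually l1 tendsto_const]) (use up lo in auto)
  then have "(\<lambda>m. a + (b - a) * (real (k m) / real (Suc m))) \<longlonglongrightarrow> a + (b - a) * t"
    by (intro tendsto_intros)
  then show ?thesis using kle lt by auto
qed

lemma obj_lim:
  assumes n: "n > 0" and "\<And>j. (\<lambda>m. bs m j) \<longlonglongrightarrow> b j" "l \<longlonglongrightarrow> l0"
  shows "(\<lambda>m. ridge_obj n p X y (l m) (bs m)) \<longlonglongrightarrow> ridge_obj n p X y l0 b"
  unfolding ridge_obj_def by (intro tendsto_intros assms) (use n in auto)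

lemma ridge_lim:
  assumes n: "n > 0" and lam: "lam > 0" and l: "\<And>m. l m > 0" "l \<longlonglongrightarrow> lam"
  shows "(\<lambda>m. ridge n p X y (l m) j) \<longlonglongrightarrow> ridge n p X y lam j"
proof -
  have "(\<lambda>m. bsol n p X y (l m) j) \<longlonglongrightarrow> bsol n p X y lam j" by (rule bsol_lim[OF lam l(2)])
  moreover have "ridge n p X y lam = bsol n p X y lam" by (rule ridge_eq[OF n lam])
  moreover have "\<And>m. ridge n p X y (l m) = bsol n p X y (l m)" by (rule ridge_eq[OF n l(1)])
  ultimately show ?thesis by simp
qed

abbreviation "GG n p \<equiv> PiM (gauss_idx n p) (\<lambda>_. N01)"

lemma Gm_meas: "(\<lambda>\<omega>. Gm n (Xof \<omega>) j k) \<in> borel_measurable (GG n p)"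
  unfolding Gm_def Xof_def by measurable

lemma rv_meas: "(\<lambda>\<omega>. rv n (Xof \<omega>) (resp p (Xof \<omega>) \<beta> \<sigma> (zof \<omega>)) k) \<in> borel_measurable (GG n p)"
  unfolding rv_def resp_def Xof_def zof_def by measurable

lemma ridge_meas:
  assumes "n > 0" "lam > 0"
  shows "(\<lambda>\<omega>. ridge n p (Xof \<omega>) (resp p (Xof \<omega>) \<beta> \<sigma> (zof \<omega>)) lam j) \<in> borel_measurable (GG n p)"
  unfolding ridge_eq[OF assms] by (rule bsol_meas[OF Gm_meas rv_meas])

lemma resp_meas: "(\<lambda>\<omega>. resp p (Xof \<omega>) \<beta> \<sigma> (zof \<omega>) i) \<in> borel_measurable (GG n p)"
  unfolding resp_def Xof_def zof_def by measurable

lemma Xof_meas: "(\<lambda>\<omega>. Xof \<omega> i j) \<in> borel_measurable (GG n p)"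
  unfolding Xof_def by measurable

lemma cost_meas:
  assumes n: "n > 0" and lam: "lam > 0"
  shows "(\<lambda>\<omega>. costC n p (Xof \<omega>) (zof \<omega>) \<sigma> \<beta> lam' (what n p (Xof \<omega>) (zof \<omega>) \<sigma> \<beta> lam)) \<in> borel_measurable (GG n p)"
  unfolding cost_eq ridge_obj_def
  by (intro borel_measurable_add borel_measurable_divide borel_measurable_sum borel_measurable_power
      borel_measurable_diff borel_measurable_times borel_measurable_const resp_meas Xof_meas ridge_meas[OF n lam])

definition gpt :: "real \<Rightarrow> real \<Rightarrow> nat \<Rightarrow> nat \<Rightarrow> real" where
  "gpt a b m k = a + (b - a) * (real k / real (Suc m))"

lemma gpt_ge: "a \<le> b \<Longrightarrow> a \<le> gpt a b m k"
  unfolding gpt_def by (intro add_increasing2 mult_nonneg_nonneg divide_nonneg_nonneg) auto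

lemma gpt_le: "a \<le> b \<Longrightarrow> k \<le> Suc m \<Longrightarrow> gpt a b m k \<le> b"
proof -
  assume ab: "a \<le> b" and k: "k \<le> Suc m"
  have "real k / real (Suc m) \<le> 1" using k by (simp add: field_simps)
  then have "(b - a) * (real k / real (Suc m)) \<le> (b - a) * 1" using ab by (intro mult_left_mono) auto
  then show ?thesis unfolding gpt_def by simp
qed

lemma event_eq_meas:
  fixes C :: "real \<Rightarrow> real \<Rightarrow> ((nat \<times> nat) + nat \<Rightarrow> real) \<Rightarrow> real"
    and n p :: nat and \<beta> :: "nat \<Rightarrow> real" and \<sigma> a b K :: real
  assumes n: "n > 0" and a: "0 < a" "a \<le> b"
  defines "C \<equiv> (\<lambda>lam lam' \<omega>. costC n p (Xof \<omega>) (zof \<omega>) \<sigma> \<beta> lam' (what n p (Xof \<omega>) (zof \<omega>) \<sigma> \<beta> lam))"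
  shows "{\<omega> \<in> space (GG n p). \<forall>lam\<in>{a..b}. \<forall>lam'\<in>{a..b}. C lam lam' \<omega> \<le> C lam' lam' \<omega> + K * \<bar>lam - lam'\<bar>}
     \<in> sets (GG n p)"
proof -
  let ?S = "{\<omega> \<in> space (GG n p). \<forall>lam\<in>{a..b}. \<forall>lam'\<in>{a..b}. C lam lam' \<omega> \<le> C lam' lam' \<omega> + K * \<bar>lam - lam'\<bar>}"
  let ?T = "{\<omega> \<in> space (GG n p). \<forall>m k m' k'. k \<le> Suc m \<longrightarrow> k' \<le> Suc m' \<longrightarrow>
     C (gpt a b m k) (gpt a b m' k') \<omega> \<le> C (gpt a b m' k') (gpt a b m' k') \<omega> + K * \<bar>gpt a b m k - gpt a b m' k'\<bar>}"
  have gpos: "gpt a b m k > 0" for m k using gpt_ge[OF a(2), of m k] a(1) by linarith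
  have Cm[measurable]: "(\<lambda>\<omega>. C (gpt a b m k) lam' \<omega>) \<in> borel_measurable (GG n p)" for m k lam'
    unfolding C_def by (rule cost_meas[OF n gpos])
  have Cobj: "C lam lam' \<omega> = ridge_obj n p (Xof \<omega>) (resp p (Xof \<omega>) \<beta> \<sigma> (zof \<omega>)) lam'
      (ridge n p (Xof \<omega>) (resp p (Xof \<omega>) \<beta> \<sigma> (zof \<omega>)) lam)" for lam lam' \<omega>
    unfolding C_def by (rule cost_eq)
  have P1: "Measurable.pred (GG n p) (\<lambda>\<omega>. C (gpt a b m k) (gpt a b m' k') \<omega> \<le> C (gpt a b m' k') (gpt a b m' k') \<omega> + K * \<bar>gpt a b m k - gpt a b m' k'\<bar>)"
    for m k m' k'
    unfolding pred_def
    by (rule borel_measurable_le[OF Cm borel_measurable_add[OF Cm borel_measurable_const]])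
  have "Measurable.pred (GG n p) (\<lambda>\<omega>. \<forall>m k m' k'. k \<le> Suc m \<longrightarrow> k' \<le> Suc m' \<longrightarrow>
     C (gpt a b m k) (gpt a b m' k') \<omega> \<le> C (gpt a b m' k') (gpt a b m' k') \<omega> + K * \<bar>gpt a b m k - gpt a b m' k'\<bar>)"
    by (intro pred_intros_countable pred_intros_imp' P1)
  then have Tm: "?T \<in> sets (GG n p)" unfolding pred_def .
  have eq: "?S = ?T"
  proof (rule Set.set_eqI, rule iffI)
    fix \<omega> assume S: "\<omega> \<in> ?S"
    show "\<omega> \<in> ?T"
    proof (intro CollectI conjI allI impI)
      show "\<omega> \<in> space (GG n p)" using S by auto
      fix m k m' k' assume "k \<le> Suc m" "k' \<le> Suc m'"
      then have "gpt a b m k \<in> {a..b}" "gpt a b m' k' \<in> {a..b}"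
        using gpt_ge[OF a(2)] gpt_le[OF a(2)] by auto
      then show "C (gpt a b m k) (gpt a b m' k') \<omega> \<le> C (gpt a b m' k') (gpt a b m' k') \<omega> + K * \<bar>gpt a b m k - gpt a b m' k'\<bar>"
        using S by blast
    qed
  next
    fix \<omega> assume T: "\<omega> \<in> ?T"
    show "\<omega> \<in> ?S"
    proof (intro CollectI conjI ballI)
      show "\<omega> \<in> space (GG n p)" using T by auto
      fix lam lam' assume lam: "lam \<in> {a..b}" and lam': "lam' \<in> {a..b}"
      obtain k where k: "\<forall>m. k m \<le> Suc m" "(\<lambda>m. gpt a b m (k m)) \<longlonglongrightarrow> lam"
        using grid_lim[of a lam b] lam unfolding gpt_def by auto
      obtain k' where k': "\<forall>m. k' m \<le> Suc m" "(\<lambda>m. gpt a b m (k' m)) \<longlonglongrightarrow> lam'"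
        using grid_lim[of a lam' b] lam' unfolding gpt_def by auto
      have lpos: "lam > 0" "lam' > 0" using lam lam' a by auto
      let ?X = "Xof \<omega>" and ?y = "resp p (Xof \<omega>) \<beta> \<sigma> (zof \<omega>)"
      have Hm: "C (gpt a b m (k m)) (gpt a b m (k' m)) \<omega> \<le> C (gpt a b m (k' m)) (gpt a b m (k' m)) \<omega>
          + K * \<bar>gpt a b m (k m) - gpt a b m (k' m)\<bar>" for m
        using T k(1) k'(1) by blast
      have r1: "(\<lambda>m. ridge n p ?X ?y (gpt a b m (k m)) j) \<longlonglongrightarrow> ridge n p ?X ?y lam j" for j
        by (rule ridge_lim[OF n lpos(1) gpos k(2)])
      have r2: "(\<lambda>m. ridge n p ?X ?y (gpt a b m (k' m)) j) \<longlonglongrightarrow> ridge n p ?X ?y lam' j" for j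
        by (rule ridge_lim[OF n lpos(2) gpos k'(2)])
      have L1: "(\<lambda>m. C (gpt a b m (k m)) (gpt a b m (k' m)) \<omega>) \<longlonglongrightarrow> C lam lam' \<omega>"
        unfolding Cobj by (rule obj_lim[OF n r1 k'(2)])
      have L2: "(\<lambda>m. C (gpt a b m (k' m)) (gpt a b m (k' m)) \<omega> + K * \<bar>gpt a b m (k m) - gpt a b m (k' m)\<bar>)
          \<longlonglongrightarrow> C lam' lam' \<omega> + K * \<bar>lam - lam'\<bar>"
        unfolding Cobj by (intro tendsto_intros obj_lim[OF n r2 k'(2)] k(2) k'(2))
      show "C lam lam' \<omega> \<le> C lam' lam' \<omega> + K * \<bar>lam - lam'\<bar>"
        by (rule LIMSEQ_le[OF L1 L2]) (use Hm in auto)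
    qed
  qed
  show ?thesis unfolding eq by (rule Tm)
qed

lemma per_n:
  fixes n p :: nat and \<beta> :: "nat \<Rightarrow> real" and \<sigma> a b M :: real
  assumes n: "n > 0" and a: "0 < a" "a \<le> b" and sM: "(\<Sum>j<p. (\<beta> j)^2) + \<sigma>^2 < M"
  shows "1 - 2 * ((\<Sum>j<p. (\<beta> j)^2) + \<sigma>^2)^2 / (real n * (M - ((\<Sum>j<p. (\<beta> j)^2) + \<sigma>^2))^2)
     \<le> measure (gauss_meas n p) {\<omega> \<in> space (gauss_meas n p).
          \<forall>lam \<in> {a..b}. \<forall>lam' \<in> {a..b}.
            costC n p (Xof \<omega>) (zof \<omega>) \<sigma> \<beta> lam' (what n p (Xof \<omega>) (zof \<omega>) \<sigma> \<beta> lam)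
            \<le> costC n p (Xof \<omega>) (zof \<omega>) \<sigma> \<beta> lam' (what n p (Xof \<omega>) (zof \<omega>) \<sigma> \<beta> lam')
              + M / (2 * a) * \<bar>lam - lam'\<bar>}"
proof -
  interpret prob_space "GG n p" by (rule PM_prob)
  define E where "E = {\<omega> \<in> space (GG n p).
          \<forall>lam \<in> {a..b}. \<forall>lam' \<in> {a..b}.
            costC n p (Xof \<omega>) (zof \<omega>) \<sigma> \<beta> lam' (what n p (Xof \<omega>) (zof \<omega>) \<sigma> \<beta> lam)
            \<le> costC n p (Xof \<omega>) (zof \<omega>) \<sigma> \<beta> lam' (what n p (Xof \<omega>) (zof \<omega>) \<sigma> \<beta> lam')
              + M / (2 * a) * \<bar>lam - lam'\<bar>}"
  define Gs where "Gs = {\<omega> \<in> space (GG n p). (\<Sum>i<n. (resp p (Xof \<omega>) \<beta> \<sigma> (zof \<omega>) i)^2) \<le> real n * M}"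
  have Em: "E \<in> sets (GG n p)"
    unfolding E_def by (rule event_eq_meas[OF n a])
  have Gm: "Gs \<in> sets (GG n p)"
    unfolding Gs_def
    by (intro borel_measurable_le borel_measurable_sum borel_measurable_power resp_meas borel_measurable_const)
  have sub: "Gs \<subseteq> E"
  proof
    fix \<omega> assume w: "\<omega> \<in> Gs"
    let ?X = "Xof \<omega>" and ?y = "resp p (Xof \<omega>) \<beta> \<sigma> (zof \<omega>)"
    have Y: "(\<Sum>i<n. (?y i)^2) \<le> real n * M" using w by (simp add: Gs_def)
    show "\<omega> \<in> E" unfolding E_def
    proof (intro CollectI conjI ballI)
      show "\<omega> \<in> space (GG n p)" using w by (simp add: Gs_def)
      fix lam lam' assume lam: "lam \<in> {a..b}" and lam': "lam' \<in> {a..b}"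
      have "ridge_obj n p ?X ?y lam' (ridge n p ?X ?y lam)
          \<le> ridge_obj n p ?X ?y lam' (ridge n p ?X ?y lam') + M / (2 * a) * \<bar>lam - lam'\<bar>"
        by (rule D_bound[OF n a(1) _ _ Y]) (use lam lam' in auto)
      then show "costC n p ?X (zof \<omega>) \<sigma> \<beta> lam' (what n p ?X (zof \<omega>) \<sigma> \<beta> lam)
            \<le> costC n p ?X (zof \<omega>) \<sigma> \<beta> lam' (what n p ?X (zof \<omega>) \<sigma> \<beta> lam') + M / (2 * a) * \<bar>lam - lam'\<bar>"
        unfolding cost_eq .
    qed
  qed
  have m1: "measure (GG n p) Gs \<le> measure (GG n p) E" by (rule finite_measure_mono[OF sub Em])
  have m2: "measure (GG n p) (space (GG n p) - Gs) = 1 - measure (GG n p) Gs" by (rule prob_compl[OF Gm])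
  have cs: "space (GG n p) - Gs = {\<omega> \<in> space (GG n p). real n * M < (\<Sum>i<n. (resp p (Xof \<omega>) \<beta> \<sigma> (zof \<omega>) i)^2)}"
    by (auto simp: Gs_def not_le)
  have m3: "measure (GG n p) (space (GG n p) - Gs) \<le> 2 * ((\<Sum>j<p. (\<beta> j)^2) + \<sigma>^2)^2 / (real n * (M - ((\<Sum>j<p. (\<beta> j)^2) + \<sigma>^2))^2)"
    unfolding cs using tail_resp[OF n sM] unfolding gauss_meas_def .
  have "1 - 2 * ((\<Sum>j<p. (\<beta> j)^2) + \<sigma>^2)^2 / (real n * (M - ((\<Sum>j<p. (\<beta> j)^2) + \<sigma>^2))^2) \<le> measure (GG n p) E"
    using m1 m2 m3 by linarith
  then show ?thesis unfolding E_def gauss_meas_def .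
qed

lemma frac_bound:
  fixes s M x :: real
  assumes "0 \<le> s" "s \<le> M - 1/2" "x > 0"
  shows "2 * s^2 / (x * (M - s)^2) \<le> 8 * M^2 / x"
proof -
  have s2: "s^2 \<le> M^2" using assms by (intro power_mono) auto
  have d: "1/4 \<le> (M - s)^2"
  proof -
    have "(1/2::real)^2 \<le> (M - s)^2" using assms by (intro power_mono) auto
    then show ?thesis by (simp add: power2_eq_square)
  qed
  have "2 * s^2 / (x * (M - s)^2) \<le> 2 * M^2 / (x * (1/4))"
    using s2 d assms by (intro frac_le mult_left_mono mult_pos_pos) auto
  also have "\<dots> = 8 * M^2 / x" by (simp add: field_simps)
  finally show ?thesis .
qed

theorem lemma11:
  fixes \<delta> \<sigma>max lmin lmax :: real
  assumes "\<delta> > 0" and "0 < lmin" and "lmin \<le> lmax"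
  shows "\<exists>K > 0. \<forall>(p :: nat \<Rightarrow> nat) (\<beta> :: nat \<Rightarrow> nat \<Rightarrow> real) (\<sigma> :: real).
     (\<lambda>n. real (p n) / real n) \<longlonglongrightarrow> \<delta> \<longrightarrow>
     0 \<le> \<sigma> \<longrightarrow> \<sigma>\<^sup>2 \<le> \<sigma>max\<^sup>2 \<longrightarrow>
     (\<exists>L. (\<lambda>n. \<Sum>j<p n. (\<beta> n j)\<^sup>2) \<longlonglongrightarrow> L \<and> L \<le> \<sigma>max\<^sup>2) \<longrightarrow>
     (\<lambda>n. measure (gauss_meas n (p n))
        {\<omega> \<in> space (gauss_meas n (p n)).
          \<forall>lam \<in> {lmin..lmax}. \<forall>lam' \<in> {lmin..lmax}.
            costC n (p n) (Xof \<omega>) (zof \<omega>) \<sigma> (\<beta> n) lam'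
               (what n (p n) (Xof \<omega>) (zof \<omega>) \<sigma> (\<beta> n) lam)
            \<le> costC n (p n) (Xof \<omega>) (zof \<omega>) \<sigma> (\<beta> n) lam'
               (what n (p n) (Xof \<omega>) (zof \<omega>) \<sigma> (\<beta> n) lam')
              + K * \<bar>lam - lam'\<bar>})
     \<longlonglongrightarrow> 1"
proof -
  define M where "M = 2 * \<sigma>max^2 + 1"
  have Mpos: "M > 0" unfolding M_def by (simp add: add_nonneg_pos)
  have Kpos: "M / (2 * lmin) > 0" using Mpos assms(2) by simp
  show ?thesis
  proof (intro exI[of _ "M / (2 * lmin)"] conjI allI impI)
    show "M / (2 * lmin) > 0" by (rule Kpos)
    fix p :: "nat \<Rightarrow> nat" and \<beta> :: "nat \<Rightarrow> nat \<Rightarrow> real" and \<sigma> :: real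
    assume \<sigma>0: "0 \<le> \<sigma>" and \<sigma>M: "\<sigma>\<^sup>2 \<le> \<sigma>max\<^sup>2"
      and Lh: "\<exists>L. (\<lambda>n. \<Sum>j<p n. (\<beta> n j)\<^sup>2) \<longlonglongrightarrow> L \<and> L \<le> \<sigma>max\<^sup>2"
    obtain L where L: "(\<lambda>n. \<Sum>j<p n. (\<beta> n j)\<^sup>2) \<longlonglongrightarrow> L" "L \<le> \<sigma>max\<^sup>2" using Lh by blast
    define s where "s n = (\<Sum>j<p n. (\<beta> n j)^2) + \<sigma>^2" for n
    define f where "f n = measure (gauss_meas n (p n))
        {\<omega> \<in> space (gauss_meas n (p n)).
          \<forall>lam \<in> {lmin..lmax}. \<forall>lam' \<in> {lmin..lmax}.
            costC n (p n) (Xof \<omega>) (zof \<omega>) \<sigma> (\<beta> n) lam'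
               (what n (p n) (Xof \<omega>) (zof \<omega>) \<sigma> (\<beta> n) lam)
            \<le> costC n (p n) (Xof \<omega>) (zof \<omega>) \<sigma> (\<beta> n) lam'
               (what n (p n) (Xof \<omega>) (zof \<omega>) \<sigma> (\<beta> n) lam')
              + M / (2 * lmin) * \<bar>lam - lam'\<bar>}" for n
    have ev1: "eventually (\<lambda>n. (\<Sum>j<p n. (\<beta> n j)^2) < L + 1/2) sequentially"
      by (rule order_tendstoD(2)[OF L(1)]) simp
    have ev: "eventually (\<lambda>n. n > 0 \<and> s n \<le> M - 1/2) sequentially"
      using ev1 eventually_gt_at_top[of 0]
    proof eventually_elim
      case (elim n)
      then show ?case using L(2) \<sigma>M unfolding s_def M_def by linarith
    qed
    have lower: "eventually (\<lambda>n. 1 - 8 * M^2 / real n \<le> f n) sequentially"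
      using ev
    proof eventually_elim
      case (elim n)
      then have n: "n > 0" and sn: "s n \<le> M - 1/2" by auto
      have s0: "0 \<le> s n" unfolding s_def by (intro add_nonneg_nonneg sum_nonneg) auto
      have sM: "(\<Sum>j<p n. (\<beta> n j)^2) + \<sigma>^2 < M" using sn unfolding s_def by linarith
      have "1 - 2 * (s n)^2 / (real n * (M - s n)^2) \<le> f n"
        unfolding f_def s_def by (rule per_n[OF n assms(2,3) sM])
      moreover have "2 * (s n)^2 / (real n * (M - s n)^2) \<le> 8 * M^2 / real n"
        by (rule frac_bound[OF s0 sn]) (use n in simp)
      ultimately show ?case by linarith
    qed
    have upper: "eventually (\<lambda>n. f n \<le> 1) sequentially"
    proof (rule always_eventually, rule allI)
      fix n
      interpret prob_space "gauss_meas n (p n)" unfolding gauss_meas_def by (rule PM_prob)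
      show "f n \<le> 1" unfolding f_def by (rule prob_le_1)
    qed
    have lim: "(\<lambda>n. 1 - 8 * M^2 / real n) \<longlonglongrightarrow> 1"
      using tendsto_diff[OF tendsto_const lim_const_over_n[of "8 * M^2"], of 1] by simp
    have "f \<longlonglongrightarrow> 1" by (rule tendsto_sandwich[OF lower upper lim tendsto_const])
    then show "(\<lambda>n. measure (gauss_meas n (p n))
        {\<omega> \<in> space (gauss_meas n (p n)).
          \<forall>lam \<in> {lmin..lmax}. \<forall>lam' \<in> {lmin..lmax}.
            costC n (p n) (Xof \<omega>) (zof \<omega>) \<sigma> (\<beta> n) lam'
               (what n (p n) (Xof \<omega>) (zof \<omega>) \<sigma> (\<beta> n) lam)
            \<le> costC n (p n) (Xof \<omega>) (zof \<omega>) \<sigma> (\<beta> n) lam'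
               (what n (p n) (Xof \<omega>) (zof \<omega>) \<sigma> (\<beta> n) lam')
              + M / (2 * lmin) * \<bar>lam - lam'\<bar>}) \<longlonglongrightarrow> 1"
      unfolding f_def .
  qed
qed


end
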